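(* Every closed $\mu$--Darboux transform $\hat f:T^2\to\mathbb R^4$ of a Hamiltonian stationary torus $f:T^2\to\mathbb R^4$ is a monochromatic Darboux transform of $f$, and vice versa.
   Context: Identify $\mathbb R^4$ with $\mathbb H$ and $\mathbb C$ with $\mathrm{span}_{\mathbb R}\{1,i\}$; $\langle\cdot,\cdot\rangle$ is the Euclidean inner product on $\mathbb C\cong\mathbb R^2$. $\Gamma\subset\mathbb C$ a lattice, $T^2=\mathbb C/\Gamma$, $\Gamma^*$ its dual lattice. A Hamiltonian stationary torus is a $\Gamma$-periodic conformal immersion $f:\mathbb C\to\mathbb H$ with $df=e^{j\beta/2}dz\,g$, $dz=dx+i\,dy$, $g$ nowhere zero, $\beta(z)=2\pi\langle\beta_0,z\rangle$, $0\ne\beta_0\in\Gamma^*$; convention $*dz=i\,dz$; left normal $N=e^{j\beta}i$. $\alpha$ is holomorphic if $*d\alpha=N\,d\alpha$. With $(dN)'=\frac12(dN-N*dN)=-df\,H$, set $d^\mu\alpha=d\alpha+\frac12df\,H\,(N\alpha(a-1)+\alpha b)$, $a=\frac{\mu+\mu^{-1}}2$, $b=\frac{\mu^{-1}-\mu}2i$ (right multiplication), $\mu\in\mathbb C_*$; $d^\mu$-parallel sections are holomorphic. With $h^{A,B}(\gamma)=e^{2\pi(\langle A,\gamma\rangle-i\langle B,\gamma\rangle)}$, $\Gamma^*_{A,B}=\{\delta\in\Gamma^*+\frac{\beta_0}2:|\delta-B|^2-|A|^2=\frac{|\beta_0|^2}4,\ \langle\delta-B,A\rangle=0\}$, $e_\delta(z)=e^{2\pi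 i\langle\delta,z\rangle}$, $\lambda_\delta=\frac2{\beta_0}(\delta-iA-B)$, a monochromatic holomorphic section is a nonzero complex multiple of $e^{j\beta/2}(1-k\lambda_\delta)e_{\delta-B}e^{2\pi\langle A,\cdot\rangle}$, $\delta\in\Gamma^*_{A,B}$. Darboux transform given by a nowhere vanishing holomorphic $\alpha$ with multiplier ($\alpha(z+\gamma)=\alpha(z)h(\gamma)$, $h:\Gamma\to\mathbb C_*$): define $\hat T$ by $d\alpha=-df\,\hat T\alpha$, $\nu=\hat T\alpha$, $\hat f=\begin{pmatrix}f\nu+\alpha\\ \nu\end{pmatrix}\mathbb H$ ($=f+\hat T^{-1}$ where $\hat T\ne0$). It is monochromatic if $\alpha$ is monochromatic, and a $\mu$--Darboux transform if $d^\mu\alpha=0$; it is closed if it is defined on $T^2$, i.e. $\alpha$ has a multiplier on $\Gamma$. *)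

theory Defs
  imports "HOL-Analysis.Analysis"
begin

text \<open>We model the quaternions H as pairs (a,b) of complex numbers standing for a + j b,
  where C = span{1,i} sits inside H as (c,0).  With i j = k and j c = cnj c j one gets
  the product below.\<close>

type_synonym quat = "complex \<times> complex"

definition qmul :: "quat \<Rightarrow> quat \<Rightarrow> quat" (infixl "\<odot>" 70) where
  "qmul p q = (fst p * fst q - cnj (snd p) * snd q, cnj (fst p) * snd q + snd p * fst q)"

definition qc :: "complex \<Rightarrow> quat" where "qc c = (c, 0)"
definition qi :: quat where "qi = (\<i>, 0)"
definition qj :: quat where "qj = (0, 1)"
definition qk :: quat where "qk = (0, - \<i>)"   \<comment> \<open>k = i j\<close>

definition qexpj :: "real \<Rightarrow> quat" where   \<comment> \<open>e^{j t} = cos t + j sin t\<close>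
  "qexpj t = (complex_of_real (cos t), complex_of_real (sin t))"

definition D :: "(complex \<Rightarrow> 'a::real_normed_vector) \<Rightarrow> complex \<Rightarrow> complex \<Rightarrow> 'a" where
  "D F z = frechet_derivative F (at z)"

fun Ck :: "nat \<Rightarrow> (complex \<Rightarrow> 'a::real_normed_vector) \<Rightarrow> bool" where
  "Ck 0 F = continuous_on UNIV F"
| "Ck (Suc n) F = ((\<forall>z. F differentiable (at z)) \<and> (\<forall>v. Ck n (\<lambda>z. D F z v)))"

definition smooth :: "(complex \<Rightarrow> 'a::real_normed_vector) \<Rightarrow> bool" where
  "smooth F \<longleftrightarrow> (\<forall>n. Ck n F)"

definition lattice :: "complex set \<Rightarrow> bool" where
  "lattice \<Gamma> \<longleftrightarrow> (\<exists>\<omega>1 \<omega>2. Im (cnj \<omega>1 * \<omega>2) \<noteq> 0 \<and>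
      \<Gamma> = {of_int m * \<omega>1 + of_int n * \<omega>2 | m n. True})"

definition dual_lattice :: "complex set \<Rightarrow> complex set" where
  "dual_lattice \<Gamma> = {\<delta>. \<forall>\<gamma>\<in>\<Gamma>. \<delta> \<bullet> \<gamma> \<in> \<int>}"

definition beta :: "complex \<Rightarrow> complex \<Rightarrow> real" where
  "beta \<beta>0 z = 2 * pi * (\<beta>0 \<bullet> z)"

definition ham_stat_torus :: "complex set \<Rightarrow> complex \<Rightarrow> (complex \<Rightarrow> quat) \<Rightarrow> bool" where
  "ham_stat_torus \<Gamma> \<beta>0 f \<longleftrightarrow> lattice \<Gamma> \<and> \<beta>0 \<in> dual_lattice \<Gamma> \<and> \<beta>0 \<noteq> 0 \<and> smooth f \<and>
     (\<forall>z. \<forall>\<gamma>\<in>\<Gamma>. f (z + \<gamma>) = f z) \<and>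
     (\<exists>g::complex \<Rightarrow> quat. (\<forall>z. g z \<noteq> 0) \<and>
        (\<forall>z. (f has_derivative (\<lambda>v. qexpj (beta \<beta>0 z / 2) \<odot> qc v \<odot> g z)) (at z)))"

definition Nrm :: "complex \<Rightarrow> complex \<Rightarrow> quat" where
  "Nrm \<beta>0 z = qexpj (beta \<beta>0 z) \<odot> qi"

text \<open>Hodge star: (*omega)(v) = omega(i v), so that *dz = i dz.
  (dN)' = (dN - N *dN)/2, and H is defined by (dN)' = - df H.\<close>
definition dN' :: "complex \<Rightarrow> complex \<Rightarrow> complex \<Rightarrow> quat" where
  "dN' \<beta>0 z v = (1/2) *\<^sub>R (D (Nrm \<beta>0) z v - Nrm \<beta>0 z \<odot> D (Nrm \<beta>0) z (\<i> * v))"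

definition Hmc :: "complex \<Rightarrow> (complex \<Rightarrow> quat) \<Rightarrow> complex \<Rightarrow> quat" where
  "Hmc \<beta>0 f z = (SOME h. \<forall>v. dN' \<beta>0 z v = - (D f z v \<odot> h))"

definition holomorphic_sec :: "complex \<Rightarrow> (complex \<Rightarrow> quat) \<Rightarrow> bool" where
  "holomorphic_sec \<beta>0 \<alpha> \<longleftrightarrow> (\<forall>z v. D \<alpha> z (\<i> * v) = Nrm \<beta>0 z \<odot> D \<alpha> z v)"

definition dmu :: "complex \<Rightarrow> (complex \<Rightarrow> quat) \<Rightarrow> complex \<Rightarrow> (complex \<Rightarrow> quat) \<Rightarrow> complex \<Rightarrow> complex \<Rightarrow> quat" where
  "dmu \<beta>0 f \<mu> \<alpha> z v =
     (let a = (\<mu> + inverse \<mu>) / 2; b = (inverse \<mu> - \<mu>) / 2 * \<i> in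
      D \<alpha> z v + (1/2) *\<^sub>R (D f z v \<odot> Hmc \<beta>0 f z \<odot>
          (Nrm \<beta>0 z \<odot> \<alpha> z \<odot> qc (a - 1) + \<alpha> z \<odot> qc b)))"

definition has_multiplier :: "complex set \<Rightarrow> (complex \<Rightarrow> quat) \<Rightarrow> bool" where
  "has_multiplier \<Gamma> \<alpha> \<longleftrightarrow> (\<exists>h::complex \<Rightarrow> complex. \<forall>\<gamma>\<in>\<Gamma>. h \<gamma> \<noteq> 0 \<and>
      (\<forall>z. \<alpha> (z + \<gamma>) = \<alpha> z \<odot> qc (h \<gamma>)))"

definition closed_darboux_section :: "complex set \<Rightarrow> complex \<Rightarrow> (complex \<Rightarrow> quat) \<Rightarrow> bool" where
  "closed_darboux_section \<Gamma> \<beta>0 \<alpha> \<longleftrightarrow> smooth \<alpha> \<and> (\<forall>z. \<alpha> z \<noteq> 0) \<and>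
      holomorphic_sec \<beta>0 \<alpha> \<and> has_multiplier \<Gamma> \<alpha>"

definition That :: "(complex \<Rightarrow> quat) \<Rightarrow> (complex \<Rightarrow> quat) \<Rightarrow> complex \<Rightarrow> quat" where
  "That f \<alpha> z = (SOME t. \<forall>v. D \<alpha> z v = - (D f z v \<odot> t \<odot> \<alpha> z))"

definition nu :: "(complex \<Rightarrow> quat) \<Rightarrow> (complex \<Rightarrow> quat) \<Rightarrow> complex \<Rightarrow> quat" where
  "nu f \<alpha> z = That f \<alpha> z \<odot> \<alpha> z"

text \<open>fh : C -> H = R^4 is the Darboux transform given by alpha: for every z the
  point (f nu + alpha, nu) H of HP^1 equals (fh z, 1) H.\<close>
definition darboux_given_by :: "(complex \<Rightarrow> quat) \<Rightarrow> (complex \<Rightarrow> quat) \<Rightarrow> (complex \<Rightarrow> quat) \<Rightarrow> bool" where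
  "darboux_given_by f \<alpha> fh \<longleftrightarrow> (\<forall>z. \<exists>q. q \<noteq> 0 \<and>
      (f z \<odot> nu f \<alpha> z + \<alpha> z, nu f \<alpha> z) = (fh z \<odot> q, qc 1 \<odot> q))"

definition closed_mu_darboux ::
  "complex set \<Rightarrow> complex \<Rightarrow> (complex \<Rightarrow> quat) \<Rightarrow> complex \<Rightarrow> (complex \<Rightarrow> quat) \<Rightarrow> bool" where
  "closed_mu_darboux \<Gamma> \<beta>0 f \<mu> fh \<longleftrightarrow> (\<exists>\<alpha>. closed_darboux_section \<Gamma> \<beta>0 \<alpha> \<and>
      (\<forall>z v. dmu \<beta>0 f \<mu> \<alpha> z v = 0) \<and> darboux_given_by f \<alpha> fh)"

definition e_exp :: "complex \<Rightarrow> complex \<Rightarrow> complex" where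
  "e_exp \<delta> z = exp (2 * pi * \<i> * complex_of_real (\<delta> \<bullet> z))"

definition Gamma_AB :: "complex set \<Rightarrow> complex \<Rightarrow> complex \<Rightarrow> complex \<Rightarrow> complex set" where
  "Gamma_AB \<Gamma> \<beta>0 A B = {\<delta>. \<delta> \<in> (\<lambda>d. d + \<beta>0 / 2) ` dual_lattice \<Gamma> \<and>
      (cmod (\<delta> - B))\<^sup>2 - (cmod A)\<^sup>2 = (cmod \<beta>0)\<^sup>2 / 4 \<and> (\<delta> - B) \<bullet> A = 0}"

definition lam :: "complex \<Rightarrow> complex \<Rightarrow> complex \<Rightarrow> complex \<Rightarrow> complex" where
  "lam \<beta>0 A B \<delta> = 2 / \<beta>0 * (\<delta> - \<i> * A - B)"

definition monochromatic :: "complex set \<Rightarrow> complex \<Rightarrow> (complex \<Rightarrow> quat) \<Rightarrow> bool" where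
  "monochromatic \<Gamma> \<beta>0 \<alpha> \<longleftrightarrow> (\<exists>A B \<delta> c. \<delta> \<in> Gamma_AB \<Gamma> \<beta>0 A B \<and> c \<noteq> 0 \<and>
      \<alpha> = (\<lambda>z. qexpj (beta \<beta>0 z / 2) \<odot> (qc 1 - qk \<odot> qc (lam \<beta>0 A B \<delta>))
                 \<odot> qc (e_exp (\<delta> - B) z) \<odot> qc (complex_of_real (exp (2 * pi * (A \<bullet> z)))) \<odot> qc c))"

definition mono_darboux :: "complex set \<Rightarrow> complex \<Rightarrow> (complex \<Rightarrow> quat) \<Rightarrow> (complex \<Rightarrow> quat) \<Rightarrow> bool" where
  "mono_darboux \<Gamma> \<beta>0 f fh \<longleftrightarrow> (\<exists>\<alpha>. monochromatic \<Gamma> \<beta>0 \<alpha> \<and> closed_darboux_section \<Gamma> \<beta>0 \<alpha> \<and>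
      darboux_given_by f \<alpha> fh)"

end

theory Submission
  imports Defs
begin


lemma qmul_fst[simp]: "fst (p \<odot> q) = fst p * fst q - cnj (snd p) * snd q" by (simp add: qmul_def)
lemma qmul_snd[simp]: "snd (p \<odot> q) = cnj (fst p) * snd q + snd p * fst q" by (simp add: qmul_def)

lemma qmul_assoc: "(p \<odot> q) \<odot> r = p \<odot> (q \<odot> r)"
  by (simp add: prod_eq_iff algebra_simps)

lemma qmul_add_left: "(p + q) \<odot> r = p \<odot> r + q \<odot> r"
  by (simp add: prod_eq_iff algebra_simps)
lemma qmul_add_right: "r \<odot> (p + q) = r \<odot> p + r \<odot> q"
  by (simp add: prod_eq_iff algebra_simps)
lemma qmul_diff_left: "(p - q) \<odot> r = p \<odot> r - q \<odot> r"
  by (simp add: prod_eq_iff algebra_simps)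
lemma qmul_diff_right: "r \<odot> (p - q) = r \<odot> p - r \<odot> q"
  by (simp add: prod_eq_iff algebra_simps)
lemma qmul_scaleR_left: "(c *\<^sub>R p) \<odot> r = c *\<^sub>R (p \<odot> r)"
  by (simp add: prod_eq_iff algebra_simps scaleR_conv_of_real)
lemma qmul_scaleR_right: "r \<odot> (c *\<^sub>R p) = c *\<^sub>R (r \<odot> p)"
  by (simp add: prod_eq_iff algebra_simps scaleR_conv_of_real)
lemma qmul_uminus_left: "(- p) \<odot> r = - (p \<odot> r)"
  by (simp add: prod_eq_iff algebra_simps)
lemma qmul_uminus_right: "r \<odot> (- p) = - (r \<odot> p)"
  by (simp add: prod_eq_iff algebra_simps)
lemma qmul_zero[simp]: "0 \<odot> p = 0" "p \<odot> 0 = 0"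
  by (simp_all add: prod_eq_iff)
lemma qc_one[simp]: "qc 1 \<odot> p = p" "p \<odot> qc 1 = p"
  by (simp_all add: prod_eq_iff qc_def)
lemma qc_mult: "qc a \<odot> qc b = qc (a * b)"
  by (simp add: prod_eq_iff qc_def)
lemma qc_right: "(p1, p2) \<odot> qc c = (p1 * c, p2 * c)"
  by (simp add: prod_eq_iff qc_def)

definition qcj :: "quat \<Rightarrow> quat" where "qcj p = (cnj (fst p), - snd p)"
definition qinv :: "quat \<Rightarrow> quat" where
  "qinv p = (1 / ((cmod (fst p))\<^sup>2 + (cmod (snd p))\<^sup>2)) *\<^sub>R qcj p"

lemma qnorm_pos: "p \<noteq> 0 \<Longrightarrow> (cmod (fst p))\<^sup>2 + (cmod (snd p))\<^sup>2 > 0"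
proof -
  assume "p \<noteq> 0"
  hence "fst p \<noteq> 0 \<or> snd p \<noteq> 0" by (cases p) (auto simp: zero_prod_def)
  thus ?thesis by (auto intro: add_pos_nonneg add_nonneg_pos)
qed

lemma mult_cnj_norm: "z * cnj z = complex_of_real ((cmod z)\<^sup>2)"
  by (metis complex_norm_square of_real_power)
lemma cnj_mult_norm: "cnj z * z = complex_of_real ((cmod z)\<^sup>2)"
  by (metis complex_norm_square of_real_power mult.commute)

lemma qinv_right: "p \<noteq> 0 \<Longrightarrow> p \<odot> qinv p = qc 1"
proof -
  assume p: "p \<noteq> 0"
  have "p \<odot> qcj p = ((cmod (fst p))\<^sup>2 + (cmod (snd p))\<^sup>2) *\<^sub>R qc 1"
    by (simp add: prod_eq_iff qcj_def qc_def mult_cnj_norm cnj_mult_norm scaleR_conv_of_real mult.commute)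
  moreover have "n \<noteq> 0 \<Longrightarrow> (1/n) *\<^sub>R (n *\<^sub>R x) = x" for n and x :: quat by simp
  ultimately show ?thesis using qnorm_pos[OF p] unfolding qinv_def qmul_scaleR_right by auto
qed
lemma qinv_left: "p \<noteq> 0 \<Longrightarrow> qinv p \<odot> p = qc 1"
proof -
  assume p: "p \<noteq> 0"
  have "qcj p \<odot> p = ((cmod (fst p))\<^sup>2 + (cmod (snd p))\<^sup>2) *\<^sub>R qc 1"
    by (simp add: prod_eq_iff qcj_def qc_def mult_cnj_norm cnj_mult_norm scaleR_conv_of_real mult.commute)
  moreover have "n \<noteq> 0 \<Longrightarrow> (1/n) *\<^sub>R (n *\<^sub>R x) = x" for n and x :: quat by simp
  ultimately show ?thesis using qnorm_pos[OF p] unfolding qinv_def qmul_scaleR_left by auto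
qed

lemma qmul_nonzero: "p \<noteq> 0 \<Longrightarrow> q \<noteq> 0 \<Longrightarrow> p \<odot> q \<noteq> 0"
proof
  assume p: "p \<noteq> 0" and q: "q \<noteq> 0" and "p \<odot> q = 0"
  hence "qinv p \<odot> (p \<odot> q) \<odot> qinv q = 0" by simp
  also have "qinv p \<odot> (p \<odot> q) \<odot> qinv q = qc 1"
    by (simp add: qmul_assoc[symmetric] qinv_left[OF p]) (simp add: qmul_assoc qinv_right[OF q])
  finally show False by (simp add: qc_def zero_prod_def)
qed

lemma qcancel_right: "r \<noteq> 0 \<Longrightarrow> p \<odot> r = q \<odot> r \<longleftrightarrow> p = q"
  by (metis qc_one(2) qinv_right qmul_assoc)
lemma qcancel_left: "r \<noteq> 0 \<Longrightarrow> r \<odot> p = r \<odot> q \<longleftrightarrow> p = q"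
  by (metis qc_one(1) qinv_left qmul_assoc)



lemma bb_qmul: "bounded_bilinear qmul"
proof
  fix a a' b b' :: quat and r :: real
  show "(a + a') \<odot> b = a \<odot> b + a' \<odot> b" by (rule qmul_add_left)
  show "b \<odot> (a + a') = b \<odot> a + b \<odot> a'" by (rule qmul_add_right)
  show "(r *\<^sub>R a) \<odot> b = r *\<^sub>R (a \<odot> b)" by (rule qmul_scaleR_left)
  show "a \<odot> (r *\<^sub>R b) = r *\<^sub>R (a \<odot> b)" by (rule qmul_scaleR_right)
next
  show "\<exists>K. \<forall>a b. norm (a \<odot> b) \<le> norm a * norm b * K"
  proof (intro exI allI)
    fix a b :: quat
    have n1: "norm (fst a) \<le> norm a" "norm (snd a) \<le> norm a" "norm (fst b) \<le> norm b" "norm (snd b) \<le> norm b"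
      by (metis prod.collapse norm_fst_le norm_snd_le)+
    have f: "norm (fst (a \<odot> b)) \<le> 2 * (norm a * norm b)"
    proof -
      have "norm (fst (a \<odot> b)) \<le> norm (fst a) * norm (fst b) + norm (snd a) * norm (snd b)"
        by (simp add: norm_mult) (metis complex_mod_cnj norm_mult norm_triangle_ineq4)
      also have "\<dots> \<le> norm a * norm b + norm a * norm b"
        by (intro add_mono mult_mono n1) auto
      finally show ?thesis by simp
    qed
    have s: "norm (snd (a \<odot> b)) \<le> 2 * (norm a * norm b)"
    proof -
      have "norm (snd (a \<odot> b)) \<le> norm (fst a) * norm (snd b) + norm (snd a) * norm (fst b)"
        by (simp add: norm_mult) (metis complex_mod_cnj norm_mult norm_triangle_ineq)
      also have "\<dots> \<le> norm a * norm b + norm a * norm b"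
        by (intro add_mono mult_mono n1) auto
      finally show ?thesis by simp
    qed
    have "norm (a \<odot> b) \<le> norm (fst (a \<odot> b)) + norm (snd (a \<odot> b))"
      by (metis prod.collapse norm_Pair_le)
    thus "norm (a \<odot> b) \<le> norm a * norm b * 4" using f s by simp
  qed
qed

lemma qexpj_add: "qexpj a \<odot> qexpj b = qexpj (a + b)"
  by (simp add: qexpj_def prod_eq_iff cos_add sin_add algebra_simps)
lemma qexpj_zero: "qexpj 0 = qc 1" by (simp add: qexpj_def qc_def)
lemma qexpj_qj: "qexpj t \<odot> qj = qj \<odot> qexpj t" by (simp add: qexpj_def qj_def prod_eq_iff)
lemma qexpj_qi: "qexpj t \<odot> qi = qi \<odot> qexpj (- t)" by (simp add: qexpj_def qi_def prod_eq_iff)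
lemma qexpj_inv: "qexpj t \<odot> qexpj (- t) = qc 1" "qexpj (- t) \<odot> qexpj t = qc 1"
  by (simp_all add: qexpj_add qexpj_zero)

lemma qexpj_deriv: "((\<lambda>z. qexpj (c * (b \<bullet> z))) has_derivative
     (\<lambda>v. (c * (b \<bullet> v)) *\<^sub>R (qexpj (c * (b \<bullet> z)) \<odot> qj))) (at z)"
proof -
  have "((\<lambda>z. (complex_of_real (cos (c * (b \<bullet> z))), complex_of_real (sin (c * (b \<bullet> z)))))
     has_derivative (\<lambda>v. (complex_of_real (- sin (c * (b \<bullet> z)) * (c * (b \<bullet> v))),
          complex_of_real (cos (c * (b \<bullet> z)) * (c * (b \<bullet> v)))))) (at z)"
    by (auto intro!: derivative_eq_intros)
  moreover have "(\<lambda>v. (complex_of_real (- sin (c * (b \<bullet> z)) * (c * (b \<bullet> v))),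
          complex_of_real (cos (c * (b \<bullet> z)) * (c * (b \<bullet> v)))))
     = (\<lambda>v. (c * (b \<bullet> v)) *\<^sub>R (qexpj (c * (b \<bullet> z)) \<odot> qj))"
    by (simp add: fun_eq_iff qexpj_def qj_def scaleR_conv_of_real prod_eq_iff algebra_simps)
  ultimately show ?thesis unfolding qexpj_def by simp
qed



lemma bl_qmul_right: "bounded_linear (\<lambda>x. x \<odot> r)"
  by (rule bounded_bilinear.bounded_linear_left[OF bb_qmul])
lemma bl_qmul_left: "bounded_linear (\<lambda>x. r \<odot> x)"
  by (rule bounded_bilinear.bounded_linear_right[OF bb_qmul])

lemma D_eq: "(F has_derivative F') (at z) \<Longrightarrow> D F z = F'"
  unfolding D_def by (metis frechet_derivative_at)

lemma Nrm_alt: "Nrm \<beta>0 = (\<lambda>z. qexpj ((2*pi) * (\<beta>0 \<bullet> z)) \<odot> qi)"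
  by (simp add: fun_eq_iff Nrm_def beta_def mult.assoc)

lemma D_Nrm: "D (Nrm \<beta>0) z v = ((2*pi) * (\<beta>0 \<bullet> v)) *\<^sub>R (qexpj ((2*pi) * (\<beta>0 \<bullet> z)) \<odot> qj \<odot> qi)"
proof -
  have "((\<lambda>z. qexpj ((2*pi) * (\<beta>0 \<bullet> z)) \<odot> qi) has_derivative
     (\<lambda>v. ((2*pi) * (\<beta>0 \<bullet> v)) *\<^sub>R (qexpj ((2*pi) * (\<beta>0 \<bullet> z)) \<odot> qj) \<odot> qi)) (at z)"
    by (rule bounded_linear.has_derivative[OF bl_qmul_right qexpj_deriv])
  from D_eq[OF this] show ?thesis by (simp add: Nrm_alt qmul_scaleR_left)
qed

definition Eq :: "complex \<Rightarrow> complex \<Rightarrow> quat" where "Eq \<beta>0 z = qexpj (pi * (\<beta>0 \<bullet> z))"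
definition Ei :: "complex \<Rightarrow> complex \<Rightarrow> quat" where "Ei \<beta>0 z = qexpj ((- pi) * (\<beta>0 \<bullet> z))"
definition K1 :: "complex \<Rightarrow> quat" where "K1 \<beta>0 = pi *\<^sub>R (qc (- \<i> * cnj \<beta>0) \<odot> qj)"

lemma inner_i: "\<beta>0 \<bullet> (\<i> * v) = - Im (cnj \<beta>0 * v)" "\<beta>0 \<bullet> v = Re (cnj \<beta>0 * v)"
  by (simp_all add: inner_complex_def algebra_simps)

lemma dN'_core: fixes t :: real and w :: complex
  shows "(1/2) *\<^sub>R (((2*pi) * Re w) *\<^sub>R (qexpj (2*t) \<odot> qj \<odot> qi) -
      (qexpj (2*t) \<odot> qi) \<odot> (((2*pi) * (- Im w)) *\<^sub>R (qexpj (2*t) \<odot> qj \<odot> qi)))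
    = qexpj t \<odot> (pi *\<^sub>R (0, \<i> * cnj w)) \<odot> qexpj (- t)"
proof -
  have sc: "(sin t)\<^sup>2 + (cos t)\<^sup>2 = 1" by simp
  show ?thesis
    using sc
    apply (simp add: qexpj_def qi_def qj_def prod_eq_iff complex_eq_iff cos_double sin_double
       scaleR_conv_of_real)
    apply (simp add: algebra_simps power2_eq_square)
    apply (insert sin_cos_squared_add[of t])
    apply algebra
    done
qed

lemma dN'_eq: "dN' \<beta>0 z v = Eq \<beta>0 z \<odot> (qc v \<odot> K1 \<beta>0) \<odot> Ei \<beta>0 z"
proof -
  define t where "t = pi * (\<beta>0 \<bullet> z)"
  define w where "w = cnj \<beta>0 * v"
  have tt: "(2*pi) * (\<beta>0 \<bullet> z) = 2 * t" by (simp add: t_def)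
  have a: "\<beta>0 \<bullet> v = Re w" "\<beta>0 \<bullet> (\<i> * v) = - Im w" by (simp_all add: w_def inner_i)
  have k: "qc v \<odot> K1 \<beta>0 = pi *\<^sub>R (0, \<i> * cnj w)"
    by (simp add: K1_def qc_def qj_def prod_eq_iff w_def scaleR_conv_of_real algebra_simps)
  have "dN' \<beta>0 z v = (1/2) *\<^sub>R (((2*pi) * Re w) *\<^sub>R (qexpj (2*t) \<odot> qj \<odot> qi) -
      (qexpj (2*t) \<odot> qi) \<odot> (((2*pi) * (- Im w)) *\<^sub>R (qexpj (2*t) \<odot> qj \<odot> qi)))"
    unfolding dN'_def D_Nrm tt a by (simp add: Nrm_alt tt)
  also have "\<dots> = Eq \<beta>0 z \<odot> (qc v \<odot> K1 \<beta>0) \<odot> Ei \<beta>0 z"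
    unfolding dN'_core k Eq_def Ei_def t_def by simp
  finally show ?thesis .
qed



lemma EqEi[simp]: "Eq \<beta>0 z \<odot> (Ei \<beta>0 z \<odot> x) = x" "Ei \<beta>0 z \<odot> (Eq \<beta>0 z \<odot> x) = x"
  by (simp_all add: Eq_def Ei_def qmul_assoc[symmetric] qexpj_add qexpj_zero)
lemma EqEi2[simp]: "Eq \<beta>0 z \<odot> Ei \<beta>0 z = qc 1" "Ei \<beta>0 z \<odot> Eq \<beta>0 z = qc 1"
  by (simp_all add: Eq_def Ei_def qexpj_add qexpj_zero)
lemma Ei_qj: "Ei \<beta>0 z \<odot> (qj \<odot> x) = qj \<odot> (Ei \<beta>0 z \<odot> x)"
  by (simp add: Ei_def qmul_assoc[symmetric] qexpj_qj)
lemma Nrm_Eq: "Nrm \<beta>0 z = Eq \<beta>0 z \<odot> (qi \<odot> Ei \<beta>0 z)"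
proof -
  define t where "t = pi * (\<beta>0 \<bullet> z)"
  have "Nrm \<beta>0 z = qexpj (t + t) \<odot> qi"
    by (simp add: Nrm_alt algebra_simps t_def)
  also have "\<dots> = Eq \<beta>0 z \<odot> (qi \<odot> Ei \<beta>0 z)"
    unfolding qexpj_add[symmetric] qmul_assoc qexpj_qi Eq_def Ei_def t_def by simp
  finally show ?thesis .
qed

lemma ham_Df: assumes "ham_stat_torus \<Gamma> \<beta>0 f"
  obtains g where "\<And>z. g z \<noteq> 0" "\<And>z v. D f z v = Eq \<beta>0 z \<odot> qc v \<odot> g z"
proof -
  from assms obtain g where g: "\<And>z. g z \<noteq> 0"
    "\<And>z. (f has_derivative (\<lambda>v. qexpj (beta \<beta>0 z / 2) \<odot> qc v \<odot> g z)) (at z)"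
    unfolding ham_stat_torus_def by blast
  have "beta \<beta>0 z / 2 = pi * (\<beta>0 \<bullet> z)" for z by (simp add: beta_def)
  hence "D f z v = Eq \<beta>0 z \<odot> qc v \<odot> g z" for z v using D_eq[OF g(2)] by (simp add: Eq_def)
  thus ?thesis using that g(1) by blast
qed

lemma Hmc_prop: assumes "ham_stat_torus \<Gamma> \<beta>0 f"
  shows "D f z v \<odot> Hmc \<beta>0 f z = - dN' \<beta>0 z v"
proof -
  obtain g where g: "\<And>z. g z \<noteq> 0" "\<And>z v. D f z v = Eq \<beta>0 z \<odot> qc v \<odot> g z"
    using ham_Df[OF assms] by blast
  define h0 where "h0 = - (qinv (g z) \<odot> (K1 \<beta>0 \<odot> Ei \<beta>0 z))"
  have "\<forall>v. dN' \<beta>0 z v = - (D f z v \<odot> h0)"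
  proof
    fix v
    have "D f z v \<odot> h0 = - (Eq \<beta>0 z \<odot> (qc v \<odot> ((g z \<odot> qinv (g z)) \<odot> (K1 \<beta>0 \<odot> Ei \<beta>0 z))))"
      by (simp add: g h0_def qmul_uminus_right qmul_assoc)
    thus "dN' \<beta>0 z v = - (D f z v \<odot> h0)"
      by (simp add: qinv_right[OF g(1)] dN'_eq qmul_assoc)
  qed
  hence "\<forall>v. dN' \<beta>0 z v = - (D f z v \<odot> Hmc \<beta>0 f z)"
    unfolding Hmc_def by (rule someI)
  thus ?thesis by (metis minus_minus)
qed

definition Lmu :: "complex \<Rightarrow> complex \<Rightarrow> complex \<Rightarrow> quat \<Rightarrow> quat" where
  "Lmu \<beta>0 \<mu> v \<phi> = (let a = (\<mu> + inverse \<mu>) / 2; b = (inverse \<mu> - \<mu>) / 2 * \<i> in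
     (1/2) *\<^sub>R ((qc v \<odot> K1 \<beta>0) \<odot> (qi \<odot> \<phi> \<odot> qc (a - 1) + \<phi> \<odot> qc b)) - (pi * (\<beta>0 \<bullet> v)) *\<^sub>R (qj \<odot> \<phi>))"

lemma D_phi: assumes "\<alpha> differentiable (at z)"
  shows "D (\<lambda>z. Ei \<beta>0 z \<odot> \<alpha> z) z v = Ei \<beta>0 z \<odot> D \<alpha> z v + ((- pi) * (\<beta>0 \<bullet> v)) *\<^sub>R (qj \<odot> (Ei \<beta>0 z \<odot> \<alpha> z))"
proof -
  have a: "(\<alpha> has_derivative D \<alpha> z) (at z)" using assms unfolding D_def
    using frechet_derivative_works by blast
  have e: "((\<lambda>z. Ei \<beta>0 z) has_derivative (\<lambda>v. ((- pi) * (\<beta>0 \<bullet> v)) *\<^sub>R (Ei \<beta>0 z \<odot> qj))) (at z)"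
    unfolding Ei_def by (rule qexpj_deriv)
  have "((\<lambda>z. Ei \<beta>0 z \<odot> \<alpha> z) has_derivative
     (\<lambda>h. Ei \<beta>0 z \<odot> D \<alpha> z h + (((- pi) * (\<beta>0 \<bullet> h)) *\<^sub>R (Ei \<beta>0 z \<odot> qj)) \<odot> \<alpha> z)) (at z)"
    by (rule bounded_bilinear.FDERIV[OF bb_qmul e a])
  from D_eq[OF this] show ?thesis
    by (simp add: qmul_scaleR_left qmul_uminus_left qmul_assoc Ei_qj[symmetric])
qed



lemma gauge: assumes ham: "ham_stat_torus \<Gamma> \<beta>0 f" and dif: "\<alpha> differentiable (at z)"
  shows "dmu \<beta>0 f \<mu> \<alpha> z v = Eq \<beta>0 z \<odot> (D (\<lambda>z. Ei \<beta>0 z \<odot> \<alpha> z) z v - Lmu \<beta>0 \<mu> v (Ei \<beta>0 z \<odot> \<alpha> z))"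
  unfolding dmu_def Lmu_def Let_def Hmc_prop[OF ham] dN'_eq D_phi[OF dif] Nrm_Eq
  by (simp add: qmul_assoc qmul_add_right qmul_add_left qmul_diff_right qmul_scaleR_right qmul_scaleR_left
      qmul_uminus_left qmul_uminus_right Ei_qj algebra_simps)



definition Xf :: "complex \<Rightarrow> complex \<Rightarrow> complex \<Rightarrow> complex" where
  "Xf \<beta>0 \<mu> v = complex_of_real (pi/2) * (cnj v * \<beta>0 + \<mu> * v * cnj \<beta>0)"

lemma inner_cplx: "complex_of_real (\<beta>0 \<bullet> v) = (cnj \<beta>0 * v + \<beta>0 * cnj v) / 2"
  by (simp add: complex_eq_iff inner_complex_def algebra_simps)

lemma Lmu_comp: assumes "\<mu> \<noteq> 0"
  shows "Lmu \<beta>0 \<mu> v (p, q) = (Xf \<beta>0 \<mu> v * q, - Xf \<beta>0 \<mu> v * p / \<mu>)"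
  using assms
  by (simp add: Lmu_def Xf_def K1_def qc_def qi_def qj_def prod_eq_iff scaleR_conv_of_real inner_cplx
      field_simps)



definition Psi :: "complex \<Rightarrow> complex \<Rightarrow> complex \<Rightarrow> complex" where
  "Psi \<beta>0 s z = complex_of_real (pi/2) * (s * \<beta>0 * cnj z - (cnj \<beta>0 / s) * z)"

lemma Psi_add: "Psi \<beta>0 s (z + w) = Psi \<beta>0 s z + Psi \<beta>0 s w"
  by (cases "s = 0") (simp_all add: Psi_def algebra_simps add_divide_distrib)
lemma Psi_zero[simp]: "Psi \<beta>0 s 0 = 0" by (simp add: Psi_def)
lemma Psi_neg: "Psi \<beta>0 (- s) z = - Psi \<beta>0 s z" by (simp add: Psi_def algebra_simps)

lemma Psi_deriv: "(Psi \<beta>0 s has_derivative Psi \<beta>0 s) (at z)"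
proof -
  have "\<And>c. ((\<lambda>z. complex_of_real (pi/2) * (s * \<beta>0 * cnj z - c * z)) has_derivative
        (\<lambda>v. complex_of_real (pi/2) * (s * \<beta>0 * cnj v - c * v))) (at z)"
    by (auto intro!: derivative_eq_intros)
  from this[of "cnj \<beta>0 / s"] show ?thesis unfolding Psi_def .
qed

lemma sX_Psi: assumes "s\<^sup>2 * \<mu> = -1" shows "s * Xf \<beta>0 \<mu> v = Psi \<beta>0 s v"
proof -
  have s: "s \<noteq> 0" using assms by auto
  have m: "\<mu> = -1 / s\<^sup>2" using assms s by (simp add: field_simps)
  show ?thesis using s unfolding m Xf_def Psi_def by (simp add: field_simps power2_eq_square)
qed

lemma ode_exp:
  assumes d: "\<And>z. (u has_derivative (\<lambda>v. Psi \<beta>0 s v * u z)) (at z)"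
  shows "u z = u 0 * exp (Psi \<beta>0 s z)"
proof -
  have "\<And>x. ((\<lambda>z. u z * exp (- Psi \<beta>0 s z)) has_derivative (\<lambda>h. 0)) (at x within UNIV)"
  proof -
    fix x
    have e: "((\<lambda>z. exp (- Psi \<beta>0 s z)) has_derivative (\<lambda>h. exp (- Psi \<beta>0 s x) * (- Psi \<beta>0 s h))) (at x)"
      by (rule has_derivative_compose[OF has_derivative_minus[OF Psi_deriv], of exp])
        (metis DERIV_exp has_field_derivative_def)
    have "((\<lambda>z. u z * exp (- Psi \<beta>0 s z)) has_derivative
       (\<lambda>h. u x * (exp (- Psi \<beta>0 s x) * (- Psi \<beta>0 s h)) + Psi \<beta>0 s h * u x * exp (- Psi \<beta>0 s x))) (at x)"
      by (rule has_derivative_mult[OF d e])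
    moreover have "(\<lambda>h. u x * (exp (- Psi \<beta>0 s x) * (- Psi \<beta>0 s h)) + Psi \<beta>0 s h * u x * exp (- Psi \<beta>0 s x)) = (\<lambda>h. 0)"
      by (simp add: fun_eq_iff algebra_simps)
    ultimately show "((\<lambda>z. u z * exp (- Psi \<beta>0 s z)) has_derivative (\<lambda>h. 0)) (at x within UNIV)" by simp
  qed
  then obtain c where c: "\<forall>x\<in>UNIV. u x * exp (- Psi \<beta>0 s x) = c"
    using has_derivative_zero_constant[of UNIV] by blast
  have "u 0 = c" using c[rule_format, of 0] by simp
  moreover have "u z = u z * exp (- Psi \<beta>0 s z) * exp (Psi \<beta>0 s z)"
    by (simp add: mult.assoc exp_add[symmetric])
  ultimately show ?thesis using c by auto
qed



definition ms :: "complex \<Rightarrow> complex \<Rightarrow> complex \<Rightarrow> quat" where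
  "ms \<beta>0 s z = Eq \<beta>0 z \<odot> (exp (Psi \<beta>0 s z), s * exp (Psi \<beta>0 s z))"

lemma phi_has_D: assumes "\<alpha> differentiable (at z)"
  shows "((\<lambda>z. Ei \<beta>0 z \<odot> \<alpha> z) has_derivative D (\<lambda>z. Ei \<beta>0 z \<odot> \<alpha> z) z) (at z)"
proof -
  have a: "(\<alpha> has_derivative D \<alpha> z) (at z)" using assms unfolding D_def
    using frechet_derivative_works by blast
  have e: "((\<lambda>z. Ei \<beta>0 z) has_derivative (\<lambda>v. ((- pi) * (\<beta>0 \<bullet> v)) *\<^sub>R (Ei \<beta>0 z \<odot> qj))) (at z)"
    unfolding Ei_def by (rule qexpj_deriv)
  have "((\<lambda>z. Ei \<beta>0 z \<odot> \<alpha> z) has_derivative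
     (\<lambda>h. Ei \<beta>0 z \<odot> D \<alpha> z h + (((- pi) * (\<beta>0 \<bullet> h)) *\<^sub>R (Ei \<beta>0 z \<odot> qj)) \<odot> \<alpha> z)) (at z)"
    by (rule bounded_bilinear.FDERIV[OF bb_qmul e a])
  with D_eq[OF this] show ?thesis by simp
qed

lemma parallel_phi:
  assumes ham: "ham_stat_torus \<Gamma> \<beta>0 f" and dif: "\<And>z. \<alpha> differentiable (at z)"
    and par: "\<And>z v. dmu \<beta>0 f \<mu> \<alpha> z v = 0"
  shows "((\<lambda>z. Ei \<beta>0 z \<odot> \<alpha> z) has_derivative (\<lambda>v. Lmu \<beta>0 \<mu> v (Ei \<beta>0 z \<odot> \<alpha> z))) (at z)"
proof -
  have "D (\<lambda>z. Ei \<beta>0 z \<odot> \<alpha> z) z v = Lmu \<beta>0 \<mu> v (Ei \<beta>0 z \<odot> \<alpha> z)" for v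
  proof -
    have "Eq \<beta>0 z \<odot> (D (\<lambda>z. Ei \<beta>0 z \<odot> \<alpha> z) z v - Lmu \<beta>0 \<mu> v (Ei \<beta>0 z \<odot> \<alpha> z)) = 0"
      using gauge[OF ham dif] par by metis
    hence "Ei \<beta>0 z \<odot> (Eq \<beta>0 z \<odot> (D (\<lambda>z. Ei \<beta>0 z \<odot> \<alpha> z) z v - Lmu \<beta>0 \<mu> v (Ei \<beta>0 z \<odot> \<alpha> z))) = 0"
      by simp
    thus ?thesis by simp
  qed
  hence "D (\<lambda>z. Ei \<beta>0 z \<odot> \<alpha> z) z = (\<lambda>v. Lmu \<beta>0 \<mu> v (Ei \<beta>0 z \<odot> \<alpha> z))" by auto
  with phi_has_D[OF dif] show ?thesis by metis
qed

lemma u_deriv: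
  assumes ham: "ham_stat_torus \<Gamma> \<beta>0 f" and dif: "\<And>z. \<alpha> differentiable (at z)"
    and par: "\<And>z v. dmu \<beta>0 f \<mu> \<alpha> z v = 0" and mu: "\<mu> \<noteq> 0" and t: "t\<^sup>2 * \<mu> = -1"
  shows "((\<lambda>z. fst (Ei \<beta>0 z \<odot> \<alpha> z) + snd (Ei \<beta>0 z \<odot> \<alpha> z) / t) has_derivative
     (\<lambda>v. Psi \<beta>0 t v * (fst (Ei \<beta>0 z \<odot> \<alpha> z) + snd (Ei \<beta>0 z \<odot> \<alpha> z) / t))) (at z)"
proof -
  define \<phi> where "\<phi> = (\<lambda>z. Ei \<beta>0 z \<odot> \<alpha> z)"
  have d: "(\<phi> has_derivative (\<lambda>v. Lmu \<beta>0 \<mu> v (\<phi> z))) (at z)"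
    unfolding \<phi>_def by (rule parallel_phi[OF ham dif par])
  have L: "Lmu \<beta>0 \<mu> v (\<phi> z) = (Xf \<beta>0 \<mu> v * snd (\<phi> z), - Xf \<beta>0 \<mu> v * fst (\<phi> z) / \<mu>)" for v
    using Lmu_comp[OF mu, of \<beta>0 v "fst (\<phi> z)" "snd (\<phi> z)"] by simp
  have d1: "((\<lambda>z. fst (\<phi> z)) has_derivative (\<lambda>v. Xf \<beta>0 \<mu> v * snd (\<phi> z))) (at z)"
    using has_derivative_fst[OF d] by (simp add: L)
  have d2: "((\<lambda>z. snd (\<phi> z)) has_derivative (\<lambda>v. - Xf \<beta>0 \<mu> v * fst (\<phi> z) / \<mu>)) (at z)"
    using has_derivative_snd[OF d] by (simp add: L)
  have t0: "t \<noteq> 0" using t by auto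
  have "((\<lambda>z. fst (\<phi> z) + snd (\<phi> z) / t) has_derivative
     (\<lambda>v. Xf \<beta>0 \<mu> v * snd (\<phi> z) + (- Xf \<beta>0 \<mu> v * fst (\<phi> z) / \<mu>) / t)) (at z)"
    by (intro has_derivative_add d1 bounded_linear.has_derivative[OF bounded_linear_divide d2])
  moreover have "(\<lambda>v. Xf \<beta>0 \<mu> v * snd (\<phi> z) + (- Xf \<beta>0 \<mu> v * fst (\<phi> z) / \<mu>) / t)
     = (\<lambda>v. Psi \<beta>0 t v * (fst (\<phi> z) + snd (\<phi> z) / t))"
  proof
    fix v
    have m: "\<mu> = -1 / t\<^sup>2" using t t0 by (simp add: field_simps)
    show "Xf \<beta>0 \<mu> v * snd (\<phi> z) + (- Xf \<beta>0 \<mu> v * fst (\<phi> z) / \<mu>) / t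
       = Psi \<beta>0 t v * (fst (\<phi> z) + snd (\<phi> z) / t)"
      unfolding sX_Psi[OF t, symmetric] using t0 unfolding m by (simp add: field_simps power2_eq_square)
  qed
  ultimately show ?thesis unfolding \<phi>_def by simp
qed



lemma decomp:
  assumes ham: "ham_stat_torus \<Gamma> \<beta>0 f" and dif: "\<And>z. \<alpha> differentiable (at z)"
    and par: "\<And>z v. dmu \<beta>0 f \<mu> \<alpha> z v = 0" and mu: "\<mu> \<noteq> 0" and s: "s\<^sup>2 * \<mu> = -1"
  defines "u \<equiv> \<lambda>t z. fst (Ei \<beta>0 z \<odot> \<alpha> z) + snd (Ei \<beta>0 z \<odot> \<alpha> z) / t"
  shows "\<And>z. u s z = u s 0 * exp (Psi \<beta>0 s z)" "\<And>z. u (-s) z = u (-s) 0 * exp (Psi \<beta>0 (-s) z)"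
    "\<And>z. \<alpha> z = ms \<beta>0 s z \<odot> qc (u s 0 / 2) + ms \<beta>0 (-s) z \<odot> qc (u (-s) 0 / 2)"
proof -
  have s': "(-s)\<^sup>2 * \<mu> = -1" using s by simp
  have s0: "s \<noteq> 0" using s by auto
  show us: "u s z = u s 0 * exp (Psi \<beta>0 s z)" for z
    unfolding u_def by (rule ode_exp[OF u_deriv[OF ham dif par mu s]])
  show um: "u (-s) z = u (-s) 0 * exp (Psi \<beta>0 (-s) z)" for z
    unfolding u_def by (rule ode_exp[OF u_deriv[OF ham dif par mu s']])
  fix z
  define p where "p = fst (Ei \<beta>0 z \<odot> \<alpha> z)"
  define q where "q = snd (Ei \<beta>0 z \<odot> \<alpha> z)"
  have "\<alpha> z = Eq \<beta>0 z \<odot> (p, q)" unfolding p_def q_def prod.collapse by simp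
  also have "(p, q) = (exp (Psi \<beta>0 s z) * (u s 0 / 2) + exp (Psi \<beta>0 (-s) z) * (u (-s) 0 / 2),
        s * exp (Psi \<beta>0 s z) * (u s 0 / 2) + (- s) * exp (Psi \<beta>0 (-s) z) * (u (-s) 0 / 2))"
  proof -
    have a: "u s z = p + q / s" "u (-s) z = p - q / s" by (simp_all add: u_def p_def q_def)
    define A where "A = u s 0 * exp (Psi \<beta>0 s z)"
    define B where "B = u (-s) 0 * exp (Psi \<beta>0 (-s) z)"
    have e1: "p + q / s = A" and e2: "p - q / s = B" using us[of z] um[of z] a by (simp_all add: A_def B_def)
    have "p = (A + B) / 2" using e1 e2 by (simp add: field_simps)
    moreover have "q = s * (A - B) / 2" using e1 e2 s0
      by (simp add: field_simps)
    ultimately show ?thesis by (simp add: A_def B_def field_simps)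
  qed
  also have "Eq \<beta>0 z \<odot> \<dots> = ms \<beta>0 s z \<odot> qc (u s 0 / 2) + ms \<beta>0 (-s) z \<odot> qc (u (-s) 0 / 2)"
    by (simp add: ms_def qmul_assoc qc_right qmul_add_right[symmetric])
  finally show "\<alpha> z = ms \<beta>0 s z \<odot> qc (u s 0 / 2) + ms \<beta>0 (-s) z \<odot> qc (u (-s) 0 / 2)" .
qed



lemma zero_dual: "0 \<in> dual_lattice \<Gamma>" by (simp add: dual_lattice_def)

lemma norm_sq_cplx: "complex_of_real ((cmod w)\<^sup>2) = w * cnj w"
  by (simp add: mult_cnj_norm)

lemma ms_formula:
  assumes s: "s \<noteq> 0" and b: "\<beta>0 \<noteq> 0"
  defines "A \<equiv> (s * \<beta>0 / 2 - \<beta>0 / (2 * cnj s)) / 2"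
    and "Dd \<equiv> - \<i> * (s * \<beta>0 / 2 + \<beta>0 / (2 * cnj s)) / 2"
  shows "complex_of_real (2 * pi * (A \<bullet> z)) + 2 * pi * \<i> * complex_of_real (Dd \<bullet> z) = Psi \<beta>0 s z"
    "(cmod Dd)\<^sup>2 - (cmod A)\<^sup>2 = (cmod \<beta>0)\<^sup>2 / 4"
    "Dd \<bullet> A = 0"
    "lam \<beta>0 A (\<beta>0 / 2 - Dd) (\<beta>0 / 2) = - \<i> * s"
proof -
  have cs: "cnj s \<noteq> 0" using s by simp
  show "complex_of_real (2 * pi * (A \<bullet> z)) + 2 * pi * \<i> * complex_of_real (Dd \<bullet> z) = Psi \<beta>0 s z"
    unfolding of_real_mult inner_cplx Psi_def A_def Dd_def using s cs
    by (simp add: field_simps)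
  have "complex_of_real ((cmod Dd)\<^sup>2 - (cmod A)\<^sup>2) = complex_of_real ((cmod \<beta>0)\<^sup>2 / 4)"
    unfolding of_real_diff of_real_divide norm_sq_cplx A_def Dd_def using s cs
    by (simp add: field_simps)
  thus "(cmod Dd)\<^sup>2 - (cmod A)\<^sup>2 = (cmod \<beta>0)\<^sup>2 / 4" using of_real_eq_iff by blast
  have "complex_of_real (Dd \<bullet> A) = 0"
    unfolding inner_cplx A_def Dd_def using s cs by (simp add: field_simps)
  thus "Dd \<bullet> A = 0" by simp
  show "lam \<beta>0 A (\<beta>0 / 2 - Dd) (\<beta>0 / 2) = - \<i> * s"
    unfolding lam_def A_def Dd_def using s cs b by (simp add: field_simps)
qed

lemma ms_mono: assumes s: "s \<noteq> 0" and b: "\<beta>0 \<noteq> 0"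
  shows "monochromatic \<Gamma> \<beta>0 (ms \<beta>0 s)"
proof -
  define A where "A = (s * \<beta>0 / 2 - \<beta>0 / (2 * cnj s)) / 2"
  define Dd where "Dd = - \<i> * (s * \<beta>0 / 2 + \<beta>0 / (2 * cnj s)) / 2"
  note F = ms_formula[OF s b, folded A_def Dd_def]
  have mem: "\<beta>0 / 2 \<in> Gamma_AB \<Gamma> \<beta>0 A (\<beta>0 / 2 - Dd)"
    unfolding Gamma_AB_def using F(2,3) zero_dual[of \<Gamma>] by (auto intro: image_eqI[of _ _ 0])
  have ex: "e_exp Dd z * complex_of_real (exp (2 * pi * (A \<bullet> z))) = exp (Psi \<beta>0 s z)" for z
    unfolding e_exp_def F(1)[of z, symmetric] exp_of_real[symmetric] exp_add by (simp add: mult.commute)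
  have "ms \<beta>0 s = (\<lambda>z. qexpj (beta \<beta>0 z / 2) \<odot> (qc 1 - qk \<odot> qc (lam \<beta>0 A (\<beta>0 / 2 - Dd) (\<beta>0 / 2)))
                 \<odot> qc (e_exp (\<beta>0 / 2 - (\<beta>0 / 2 - Dd)) z) \<odot> qc (complex_of_real (exp (2 * pi * (A \<bullet> z)))) \<odot> qc 1)"
  proof
    fix z
    have "qc 1 - qk \<odot> qc (- \<i> * s) = (1, s)" by (simp add: qc_def qk_def prod_eq_iff)
    moreover have "beta \<beta>0 z / 2 = pi * (\<beta>0 \<bullet> z)" by (simp add: beta_def)
    ultimately show "ms \<beta>0 s z = qexpj (beta \<beta>0 z / 2) \<odot> (qc 1 - qk \<odot> qc (lam \<beta>0 A (\<beta>0 / 2 - Dd) (\<beta>0 / 2)))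
                 \<odot> qc (e_exp (\<beta>0 / 2 - (\<beta>0 / 2 - Dd)) z) \<odot> qc (complex_of_real (exp (2 * pi * (A \<bullet> z)))) \<odot> qc 1"
      unfolding F(4) using ex[of z]
      by (simp add: ms_def Eq_def qmul_assoc qc_mult qc_right mult.assoc)
  qed
  thus ?thesis unfolding monochromatic_def using mem
    by (intro exI[of _ A] exI[of _ "\<beta>0/2 - Dd"] exI[of _ "\<beta>0/2"] exI[of _ 1]) simp
qed



lemma qexpj_int: assumes "x \<in> \<int>"
  shows "qexpj (pi * x) = qc (complex_of_real (cos (pi * x)))" "qexpj ((- pi) * x) = qc (complex_of_real (cos (pi * x)))"
    "cos (pi * x) \<noteq> 0"
proof -
  have s: "sin (pi * x) = 0" using assms sin_times_pi_eq_0[of x] by (simp add: mult.commute)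
  show "qexpj (pi * x) = qc (complex_of_real (cos (pi * x)))" "qexpj ((- pi) * x) = qc (complex_of_real (cos (pi * x)))"
    using s by (simp_all add: qexpj_def qc_def)
  show "cos (pi * x) \<noteq> 0" using s sin_cos_squared_add[of "pi * x"] by auto
qed

lemma qc_real_comm: "qc (complex_of_real r) \<odot> p = p \<odot> qc (complex_of_real r)"
  by (simp add: qc_def prod_eq_iff)

lemma Eq_shift: assumes "\<beta>0 \<bullet> \<gamma> \<in> \<int>"
  shows "Eq \<beta>0 (z + \<gamma>) = Eq \<beta>0 z \<odot> qc (complex_of_real (cos (pi * (\<beta>0 \<bullet> \<gamma>))))"
    "Ei \<beta>0 (z + \<gamma>) = Ei \<beta>0 z \<odot> qc (complex_of_real (cos (pi * (\<beta>0 \<bullet> \<gamma>))))"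
proof -
  show "Eq \<beta>0 (z + \<gamma>) = Eq \<beta>0 z \<odot> qc (complex_of_real (cos (pi * (\<beta>0 \<bullet> \<gamma>))))"
    unfolding Eq_def qexpj_int(1)[OF assms, symmetric] qexpj_add by (simp add: inner_add_right algebra_simps)
  show "Ei \<beta>0 (z + \<gamma>) = Ei \<beta>0 z \<odot> qc (complex_of_real (cos (pi * (\<beta>0 \<bullet> \<gamma>))))"
    unfolding Ei_def qexpj_int(2)[OF assms, symmetric] qexpj_add by (simp add: inner_add_right algebra_simps)
qed

lemma ms_shift: assumes "\<beta>0 \<bullet> \<gamma> \<in> \<int>"
  shows "ms \<beta>0 s (z + \<gamma>) = ms \<beta>0 s z \<odot> qc (complex_of_real (cos (pi * (\<beta>0 \<bullet> \<gamma>))) * exp (Psi \<beta>0 s \<gamma>))"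
proof -
  define c where "c = complex_of_real (cos (pi * (\<beta>0 \<bullet> \<gamma>)))"
  have "ms \<beta>0 s (z + \<gamma>) = Eq \<beta>0 z \<odot> (qc c \<odot> (exp (Psi \<beta>0 s z) * exp (Psi \<beta>0 s \<gamma>), s * (exp (Psi \<beta>0 s z) * exp (Psi \<beta>0 s \<gamma>))))"
    by (simp add: ms_def Eq_shift[OF assms] c_def Psi_add exp_add qmul_assoc)
  also have "\<dots> = ms \<beta>0 s z \<odot> qc (c * exp (Psi \<beta>0 s \<gamma>))"
    by (simp add: ms_def qmul_assoc c_def qc_def prod_eq_iff algebra_simps)
  finally show ?thesis by (simp add: c_def)
qed

lemma ms_mult: assumes "\<beta>0 \<in> dual_lattice \<Gamma>" shows "has_multiplier \<Gamma> (ms \<beta>0 s)"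
proof -
  have I: "\<gamma> \<in> \<Gamma> \<Longrightarrow> \<beta>0 \<bullet> \<gamma> \<in> \<int>" for \<gamma> using assms by (simp add: dual_lattice_def)
  show ?thesis unfolding has_multiplier_def
    apply (rule exI[of _ "\<lambda>\<gamma>. complex_of_real (cos (pi * (\<beta>0 \<bullet> \<gamma>))) * exp (Psi \<beta>0 s \<gamma>)"])
    using I qexpj_int(3) ms_shift by auto
qed



lemma D_right: assumes "F differentiable (at z)" shows "D (\<lambda>z. F z \<odot> r) z v = D F z v \<odot> r"
proof -
  have "(F has_derivative D F z) (at z)" using assms unfolding D_def using frechet_derivative_works by blast
  from bounded_linear.has_derivative[OF bl_qmul_right this, of r] have
    "((\<lambda>z. F z \<odot> r) has_derivative (\<lambda>v. D F z v \<odot> r)) (at z)" .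
  from D_eq[OF this] show ?thesis by simp
qed

lemma diff_right: "F differentiable (at z) \<Longrightarrow> (\<lambda>z. F z \<odot> r) differentiable (at z)"
  using bounded_linear.has_derivative[OF bl_qmul_right] unfolding differentiable_def by blast

lemma Ck_right: "Ck n F \<Longrightarrow> Ck n (\<lambda>z. F z \<odot> r)"
proof (induction n arbitrary: F)
  case 0
  then show ?case by (auto intro: continuous_on_compose2[OF bounded_linear.continuous_on[OF bl_qmul_right continuous_on_id]])
next
  case (Suc n)
  have dif: "\<forall>z. F differentiable (at z)" and ck: "\<forall>v. Ck n (\<lambda>z. D F z v)" using Suc.prems by auto
  have "(\<lambda>z. D (\<lambda>z. F z \<odot> r) z v) = (\<lambda>z. D F z v \<odot> r)" for v using dif D_right by blast
  moreover have "\<forall>z. (\<lambda>z. F z \<odot> r) differentiable (at z)" using dif diff_right by blast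
  ultimately show ?case using ck Suc.IH by simp
qed

lemma smooth_right: "smooth F \<Longrightarrow> smooth (\<lambda>z. F z \<odot> r)"
  unfolding smooth_def using Ck_right by blast

lemma smooth_diff: "smooth F \<Longrightarrow> F differentiable (at z)"
  unfolding smooth_def by (metis Ck.simps(2))

lemma holo_right: assumes "smooth \<alpha>" "holomorphic_sec \<beta>0 \<alpha>"
  shows "holomorphic_sec \<beta>0 (\<lambda>z. \<alpha> z \<odot> r)"
  using assms unfolding holomorphic_sec_def by (simp add: D_right smooth_diff qmul_assoc)

lemma That_right: assumes "\<And>z. \<alpha> differentiable (at z)" "r \<noteq> 0"
  shows "That f (\<lambda>z. \<alpha> z \<odot> r) z = That f \<alpha> z"
proof -
  have "(\<lambda>t. \<forall>v. D (\<lambda>z. \<alpha> z \<odot> r) z v = - (D f z v \<odot> t \<odot> (\<alpha> z \<odot> r))) =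
        (\<lambda>t. \<forall>v. D \<alpha> z v = - (D f z v \<odot> t \<odot> \<alpha> z))"
  proof -
    have "D (\<lambda>z. \<alpha> z \<odot> r) z v = - (D f z v \<odot> t \<odot> (\<alpha> z \<odot> r)) \<longleftrightarrow> D \<alpha> z v = - (D f z v \<odot> t \<odot> \<alpha> z)" for t v
    proof -
      have "- (D f z v \<odot> t \<odot> (\<alpha> z \<odot> r)) = (- (D f z v \<odot> t \<odot> \<alpha> z)) \<odot> r"
        by (simp add: qmul_assoc qmul_uminus_left)
      thus ?thesis by (simp add: D_right assms qcancel_right)
    qed
    thus ?thesis by simp
  qed
  thus ?thesis unfolding That_def by simp
qed

lemma darboux_right: assumes "\<And>z. \<alpha> differentiable (at z)" "r \<noteq> 0" "darboux_given_by f \<alpha> fh"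
  shows "darboux_given_by f (\<lambda>z. \<alpha> z \<odot> r) fh"
  unfolding darboux_given_by_def
proof
  fix z
  obtain q where q: "q \<noteq> 0" "(f z \<odot> nu f \<alpha> z + \<alpha> z, nu f \<alpha> z) = (fh z \<odot> q, qc 1 \<odot> q)"
    using assms(3) unfolding darboux_given_by_def by blast
  have n: "nu f (\<lambda>z. \<alpha> z \<odot> r) z = nu f \<alpha> z \<odot> r"
    unfolding nu_def That_right[OF assms(1,2)] by (simp add: qmul_assoc)
  show "\<exists>q. q \<noteq> 0 \<and> (f z \<odot> nu f (\<lambda>z. \<alpha> z \<odot> r) z + \<alpha> z \<odot> r, nu f (\<lambda>z. \<alpha> z \<odot> r) z) = (fh z \<odot> q, qc 1 \<odot> q)"
  proof (rule exI[of _ "q \<odot> r"])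
    have e1: "f z \<odot> nu f \<alpha> z + \<alpha> z = fh z \<odot> q" and e2: "nu f \<alpha> z = q" using q(2) by auto
    have "(f z \<odot> nu f \<alpha> z + \<alpha> z) \<odot> r = fh z \<odot> q \<odot> r" using e1 by simp
    hence "f z \<odot> nu f (\<lambda>z. \<alpha> z \<odot> r) z + \<alpha> z \<odot> r = fh z \<odot> (q \<odot> r)"
      by (simp add: n qmul_assoc qmul_add_left)
    thus "q \<odot> r \<noteq> 0 \<and> (f z \<odot> nu f (\<lambda>z. \<alpha> z \<odot> r) z + \<alpha> z \<odot> r, nu f (\<lambda>z. \<alpha> z \<odot> r) z) = (fh z \<odot> (q \<odot> r), qc 1 \<odot> (q \<odot> r))"
      using qmul_nonzero[OF q(1) assms(2)] by (simp add: n e2)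
  qed
qed



lemma W_zero: fixes W w1 w2 :: complex
  assumes "Re (W * w1) = 0" "Re (W * w2) = 0" "Im (cnj w1 * w2) \<noteq> 0"
  shows "W = 0"
proof -
  define d where "d = Re w1 * Im w2 - Re w2 * Im w1"
  have d: "d \<noteq> 0" using assms(3) by (simp add: d_def algebra_simps)
  have e1: "Re W * Re w1 = Im W * Im w1" and e2: "Re W * Re w2 = Im W * Im w2" using assms(1,2) by auto
  have "Re W * d = 0" unfolding d_def
    by (smt (verit, ccfv_threshold) e1 e2 mult.commute mult.left_commute right_diff_distrib)
  moreover have "Im W * d = 0" unfolding d_def
    by (smt (verit, ccfv_threshold) e1 e2 mult.commute mult.left_commute right_diff_distrib)
  ultimately show ?thesis using d by (simp add: complex_eq_iff)
qed

lemma Re_Psi: "Re (Psi \<beta>0 s z) = (pi/2) * Re ((cnj (s * \<beta>0) - cnj \<beta>0 / s) * z)"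
proof -
  have g: "Re (complex_of_real r * (a * cnj z - c * z)) = r * Re ((cnj a - c) * z)" for r a c
    by (simp add: algebra_simps)
  show ?thesis unfolding Psi_def by (rule g)
qed

lemma exp_eq_Re: "exp w = exp (- w) \<Longrightarrow> Re w = 0"
proof -
  assume "exp w = exp (- w)"
  hence "norm (exp w) = norm (exp (- w))" by simp
  hence "exp (Re w) = exp (- Re w)" by simp
  thus "Re w = 0" by simp
qed

lemma double_point:
  assumes lat: "lattice \<Gamma>" and b0: "\<beta>0 \<in> dual_lattice \<Gamma>" "\<beta>0 \<noteq> 0" and s: "s \<noteq> 0"
    and mult: "has_multiplier \<Gamma> \<alpha>"
    and dec: "\<And>z. \<alpha> z = ms \<beta>0 s z \<odot> qc C1 + ms \<beta>0 (-s) z \<odot> qc C2"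
    and C: "C1 \<noteq> 0" "C2 \<noteq> 0"
  shows "\<And>z. \<alpha> z = ms \<beta>0 s z \<odot> (qc C1 + qj \<odot> qc (- s * C2))"
proof -
  obtain h where h: "\<And>\<gamma>. \<gamma> \<in> \<Gamma> \<Longrightarrow> h \<gamma> \<noteq> 0 \<and> (\<forall>z. \<alpha> (z + \<gamma>) = \<alpha> z \<odot> qc (h \<gamma>))"
    using mult unfolding has_multiplier_def by blast
  have ms0: "ms \<beta>0 t 0 = (1, t)" for t by (simp add: ms_def Eq_def qexpj_zero)
  have key: "Re (Psi \<beta>0 s \<gamma>) = 0" if g: "\<gamma> \<in> \<Gamma>" for \<gamma>
  proof -
    have I: "\<beta>0 \<bullet> \<gamma> \<in> \<int>" using b0 g by (simp add: dual_lattice_def)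
    define c where "c = complex_of_real (cos (pi * (\<beta>0 \<bullet> \<gamma>)))"
    have c0: "c \<noteq> 0" using qexpj_int(3)[OF I] by (simp add: c_def)
    have "\<alpha> (0 + \<gamma>) = \<alpha> 0 \<odot> qc (h \<gamma>)" using h[OF g] by blast
    hence "ms \<beta>0 s 0 \<odot> qc (c * exp (Psi \<beta>0 s \<gamma>)) \<odot> qc C1 + ms \<beta>0 (-s) 0 \<odot> qc (c * exp (Psi \<beta>0 (-s) \<gamma>)) \<odot> qc C2
        = (ms \<beta>0 s 0 \<odot> qc C1 + ms \<beta>0 (-s) 0 \<odot> qc C2) \<odot> qc (h \<gamma>)"
      unfolding dec ms_shift[OF I] c_def by simp
    hence e: "(c * exp (Psi \<beta>0 s \<gamma>) * C1 + c * exp (Psi \<beta>0 (-s) \<gamma>) * C2,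
              s * (c * exp (Psi \<beta>0 s \<gamma>) * C1) - s * (c * exp (Psi \<beta>0 (-s) \<gamma>) * C2))
           = ((C1 + C2) * h \<gamma>, (s * C1 - s * C2) * h \<gamma>)"
      by (simp add: ms0 qc_def prod_eq_iff algebra_simps)
    have "c * exp (Psi \<beta>0 s \<gamma>) * C1 = C1 * h \<gamma>" "c * exp (Psi \<beta>0 (-s) \<gamma>) * C2 = C2 * h \<gamma>"
    proof -
      define a where "a = c * exp (Psi \<beta>0 s \<gamma>) * C1 - C1 * h \<gamma>"
      define b where "b = c * exp (Psi \<beta>0 (-s) \<gamma>) * C2 - C2 * h \<gamma>"
      have "a + b = 0" "s * (a - b) = 0" using e by (simp_all add: a_def b_def algebra_simps)
      hence "a = 0" "b = 0" using s by (simp_all add: eq_neg_iff_add_eq_0[symmetric])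
      thus "c * exp (Psi \<beta>0 s \<gamma>) * C1 = C1 * h \<gamma>" "c * exp (Psi \<beta>0 (-s) \<gamma>) * C2 = C2 * h \<gamma>"
        by (simp_all add: a_def b_def)
    qed
    hence "c * exp (Psi \<beta>0 s \<gamma>) = c * exp (Psi \<beta>0 (-s) \<gamma>)" using C by (simp add: field_simps)
    hence "exp (Psi \<beta>0 s \<gamma>) = exp (- Psi \<beta>0 s \<gamma>)" using c0 by (simp add: Psi_neg)
    thus ?thesis by (rule exp_eq_Re)
  qed
  obtain w1 w2 where w: "Im (cnj w1 * w2) \<noteq> 0" "\<Gamma> = {of_int m * w1 + of_int n * w2 | m n. True}"
    using lat unfolding lattice_def by blast
  have "w1 \<in> \<Gamma>" unfolding w(2) by (rule CollectI, rule exI[of _ 1], rule exI[of _ 0]) simp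
  have "w2 \<in> \<Gamma>" unfolding w(2) by (rule CollectI, rule exI[of _ 0], rule exI[of _ 1]) simp
  define W where "W = cnj (s * \<beta>0) - cnj \<beta>0 / s"
  have "Re (W * w1) = 0" using key[OF \<open>w1 \<in> \<Gamma>\<close>] by (simp add: Re_Psi W_def)
  moreover have "Re (W * w2) = 0" using key[OF \<open>w2 \<in> \<Gamma>\<close>] by (simp add: Re_Psi W_def)
  ultimately have W0: "W = 0" using W_zero w(1) by blast
  have ReP: "Re (Psi \<beta>0 s z) = 0" for z
  proof -
    have "Re (Psi \<beta>0 s z) = (pi/2) * Re (W * z)" unfolding W_def by (rule Re_Psi)
    thus ?thesis using W0 by simp
  qed
  have "cnj s * cnj \<beta>0 = cnj \<beta>0 / s" using W0 by (simp add: W_def)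
  hence ss: "cnj s * s = 1" using s b0(2) by (simp add: field_simps)
  have msm: "ms \<beta>0 (-s) z = ms \<beta>0 s z \<odot> (qj \<odot> qc (- s))" for z
  proof -
    have c: "cnj (exp (Psi \<beta>0 s z)) = exp (Psi \<beta>0 (-s) z)"
    proof -
      have "cnj (Psi \<beta>0 s z) = - Psi \<beta>0 s z" using ReP[of z] by (simp add: complex_eq_iff)
      thus ?thesis by (simp add: exp_cnj Psi_neg)
    qed
    have "(exp (Psi \<beta>0 s z), s * exp (Psi \<beta>0 s z)) \<odot> (qj \<odot> qc (- s))
        = (exp (Psi \<beta>0 (-s) z), - s * exp (Psi \<beta>0 (-s) z))"
      using ss by (simp add: qj_def qc_def prod_eq_iff c[symmetric] algebra_simps)
    thus ?thesis by (simp add: ms_def qmul_assoc)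
  qed
  fix z
  show "\<alpha> z = ms \<beta>0 s z \<odot> (qc C1 + qj \<odot> qc (- s * C2))"
    unfolding dec msm by (simp add: qmul_assoc qc_mult qmul_add_right)
qed



lemma mono_exp:
  assumes b: "\<beta>0 \<noteq> 0" and c1: "(cmod Dd)\<^sup>2 - (cmod A)\<^sup>2 = (cmod \<beta>0)\<^sup>2 / 4" and c2: "Dd \<bullet> A = 0"
  defines "s \<equiv> \<i> * (2 / \<beta>0 * (Dd - \<i> * A))"
  shows "s \<noteq> 0" "complex_of_real (2 * pi * (A \<bullet> z)) + 2 * pi * \<i> * complex_of_real (Dd \<bullet> z) = Psi \<beta>0 s z"
proof -
  define U where "U = A + \<i> * Dd"
  have sU: "s = 2 * U / \<beta>0" unfolding s_def U_def using b by (simp add: field_simps)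
  have "(cnj A + \<i> * cnj Dd) * U = A * cnj A - Dd * cnj Dd + \<i> * (cnj Dd * A + Dd * cnj A)"
    by (simp add: U_def algebra_simps)
  also have "\<dots> = complex_of_real ((cmod A)\<^sup>2 - (cmod Dd)\<^sup>2) + \<i> * (2 * complex_of_real (Dd \<bullet> A))"
    unfolding of_real_diff norm_sq_cplx inner_cplx by (simp add: algebra_simps)
  also have "\<dots> = - (\<beta>0 * cnj \<beta>0) / 4"
  proof -
    have e1: "(cmod A)\<^sup>2 - (cmod Dd)\<^sup>2 = - ((cmod \<beta>0)\<^sup>2 / 4)" using c1 by simp
    show ?thesis unfolding e1 c2 of_real_minus of_real_divide norm_sq_cplx by simp
  qed
  finally have hk: "(cnj A + \<i> * cnj Dd) * U = - (\<beta>0 * cnj \<beta>0) / 4" .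
  have U0: "U \<noteq> 0" using hk b by auto
  thus "s \<noteq> 0" using b by (simp add: sU)
  have "complex_of_real (2 * pi * (A \<bullet> z)) + 2 * pi * \<i> * complex_of_real (Dd \<bullet> z)
      = pi * ((cnj A + \<i> * cnj Dd) * z) + pi * (U * cnj z)"
    unfolding of_real_mult inner_cplx U_def by (simp add: field_simps)
  also have "\<dots> = Psi \<beta>0 s z"
  proof -
    have "4 * ((cnj A + \<i> * cnj Dd) * U) = - (\<beta>0 * cnj \<beta>0)" unfolding hk by simp
    hence h2: "\<beta>0 * cnj \<beta>0 = - 4 * (cnj A + \<i> * cnj Dd) * U"
      by (metis minus_minus mult.assoc mult_minus_left)
    have a: "s * \<beta>0 = 2 * U" using b by (simp add: sU)
    have c: "cnj \<beta>0 / s = - 2 * (cnj A + \<i> * cnj Dd)"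
    proof -
      have "cnj \<beta>0 / s = (\<beta>0 * cnj \<beta>0) / (2 * U)" using b U0 by (simp add: sU field_simps)
      also have "\<dots> = - 2 * (cnj A + \<i> * cnj Dd)" unfolding h2 using U0 by (simp add: field_simps)
      finally show ?thesis .
    qed
    show ?thesis unfolding Psi_def a c by (simp add: algebra_simps)
  qed
  finally show "complex_of_real (2 * pi * (A \<bullet> z)) + 2 * pi * \<i> * complex_of_real (Dd \<bullet> z) = Psi \<beta>0 s z" .
qed



lemma qc_zero[simp]: "qc 0 = 0" by (simp add: qc_def zero_prod_def)

lemma exp_Psi_deriv: "((\<lambda>z. exp (Psi \<beta>0 s z) * c) has_derivative (\<lambda>v. exp (Psi \<beta>0 s z) * Psi \<beta>0 s v * c)) (at z)"
proof -
  have "((\<lambda>z. exp (Psi \<beta>0 s z)) has_derivative (\<lambda>v. exp (Psi \<beta>0 s z) * Psi \<beta>0 s v)) (at z)"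
    by (rule has_derivative_compose[OF Psi_deriv, of exp]) (metis DERIV_exp has_field_derivative_def)
  from has_derivative_mult_left[OF this, of c] show ?thesis by (simp add: mult.commute)
qed

lemma ms_parallel:
  assumes ham: "ham_stat_torus \<Gamma> \<beta>0 f" and s: "s\<^sup>2 * \<mu> = -1"
  shows "dmu \<beta>0 f \<mu> (\<lambda>z. ms \<beta>0 s z \<odot> qc c) z v = 0"
proof -
  have mu: "\<mu> \<noteq> 0" using s by auto
  define \<phi> where "\<phi> = (\<lambda>z. (exp (Psi \<beta>0 s z) * c, s * (exp (Psi \<beta>0 s z) * c)))"
  have al: "(\<lambda>z. ms \<beta>0 s z \<odot> qc c) = (\<lambda>z. Eq \<beta>0 z \<odot> \<phi> z)"
    by (simp add: fun_eq_iff ms_def \<phi>_def qmul_assoc qc_right mult.assoc)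
  have ph: "(\<lambda>z. Ei \<beta>0 z \<odot> (ms \<beta>0 s z \<odot> qc c)) = \<phi>"
  proof
    fix z show "Ei \<beta>0 z \<odot> (ms \<beta>0 s z \<odot> qc c) = \<phi> z" using fun_cong[OF al, of z] by simp
  qed
  have dph: "(\<phi> has_derivative (\<lambda>v. (exp (Psi \<beta>0 s z) * Psi \<beta>0 s v * c, s * (exp (Psi \<beta>0 s z) * Psi \<beta>0 s v * c)))) (at z)" for z
    unfolding \<phi>_def
    by (intro has_derivative_Pair exp_Psi_deriv has_derivative_mult_left[of _ _ _ s, simplified mult.commute]
        bounded_linear.has_derivative[OF bounded_linear_mult_right])
  have dif: "(\<lambda>z. ms \<beta>0 s z \<odot> qc c) differentiable (at z)" for z
  proof -
    have e: "((\<lambda>z. Eq \<beta>0 z) has_derivative (\<lambda>v. (pi * (\<beta>0 \<bullet> v)) *\<^sub>R (Eq \<beta>0 z \<odot> qj))) (at z)"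
      unfolding Eq_def by (rule qexpj_deriv)
    show ?thesis unfolding al differentiable_def using bounded_bilinear.FDERIV[OF bb_qmul e dph] by blast
  qed
  have "D (\<lambda>z. Ei \<beta>0 z \<odot> (ms \<beta>0 s z \<odot> qc c)) z v = Lmu \<beta>0 \<mu> v (Ei \<beta>0 z \<odot> (ms \<beta>0 s z \<odot> qc c))"
  proof -
    have "Ei \<beta>0 z \<odot> (ms \<beta>0 s z \<odot> qc c) = \<phi> z" using ph by metis
    moreover have "Lmu \<beta>0 \<mu> v (\<phi> z) = (exp (Psi \<beta>0 s z) * Psi \<beta>0 s v * c, s * (exp (Psi \<beta>0 s z) * Psi \<beta>0 s v * c))"
    proof -
      have sx: "s * Xf \<beta>0 \<mu> v = Psi \<beta>0 s v" by (rule sX_Psi[OF s])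
      have "- Xf \<beta>0 \<mu> v / \<mu> = s * Psi \<beta>0 s v"
      proof -
        have s0: "s \<noteq> 0" using s by auto
        have m: "\<mu> = -1 / s\<^sup>2" using s mu s0 by (simp add: field_simps)
        show ?thesis unfolding sx[symmetric] using mu unfolding m by (simp add: field_simps power2_eq_square)
      qed
      note H = this
      have h2: "- Xf \<beta>0 \<mu> v * (exp (Psi \<beta>0 s z) * c) / \<mu> = s * (exp (Psi \<beta>0 s z) * Psi \<beta>0 s v * c)"
      proof -
        have "- Xf \<beta>0 \<mu> v * (exp (Psi \<beta>0 s z) * c) / \<mu> = (- Xf \<beta>0 \<mu> v / \<mu>) * (exp (Psi \<beta>0 s z) * c)"
          by (simp add: divide_inverse algebra_simps)
        also have "\<dots> = s * Psi \<beta>0 s v * (exp (Psi \<beta>0 s z) * c)" by (simp only: H)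
        finally show ?thesis by (simp add: algebra_simps)
      qed
      have h1: "Xf \<beta>0 \<mu> v * (s * (exp (Psi \<beta>0 s z) * c)) = exp (Psi \<beta>0 s z) * Psi \<beta>0 s v * c"
        unfolding sx[symmetric] by (simp add: algebra_simps)
      show ?thesis unfolding \<phi>_def Lmu_comp[OF mu] h1 h2 by simp
    qed
    ultimately show ?thesis unfolding ph D_eq[OF dph] by simp
  qed
  thus ?thesis unfolding gauge[OF ham dif] by simp
qed



lemma qinv_nz: "Q \<noteq> 0 \<Longrightarrow> qinv Q \<noteq> 0"
proof
  assume Q: "Q \<noteq> 0" and z: "qinv Q = 0"
  have "qc 1 = Q \<odot> qinv Q" using qinv_right[OF Q] by simp
  also have "\<dots> = 0" using z by simp
  finally show False by (simp add: qc_def zero_prod_def)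
qed

lemma transfer_ms:
  assumes ham: "ham_stat_torus \<Gamma> \<beta>0 f" and cds: "closed_darboux_section \<Gamma> \<beta>0 \<alpha>"
    and db: "darboux_given_by f \<alpha> fh" and t: "t \<noteq> 0" and Q: "Q \<noteq> 0"
    and eq: "\<And>z. \<alpha> z = ms \<beta>0 t z \<odot> Q"
  shows "mono_darboux \<Gamma> \<beta>0 f fh"
proof -
  have b0: "\<beta>0 \<in> dual_lattice \<Gamma>" "\<beta>0 \<noteq> 0" using ham unfolding ham_stat_torus_def by auto
  have sm: "smooth \<alpha>" and nz: "\<And>z. \<alpha> z \<noteq> 0" and ho: "holomorphic_sec \<beta>0 \<alpha>"
    using cds unfolding closed_darboux_section_def by auto
  have dif: "\<And>z. \<alpha> differentiable (at z)" using sm smooth_diff by blast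
  have msq: "ms \<beta>0 t = (\<lambda>z. \<alpha> z \<odot> qinv Q)"
    by (simp add: fun_eq_iff eq qmul_assoc qinv_right[OF Q])
  have "closed_darboux_section \<Gamma> \<beta>0 (ms \<beta>0 t)"
    unfolding closed_darboux_section_def msq[symmetric, symmetric]
    using smooth_right[OF sm] qmul_nonzero[OF nz qinv_nz[OF Q]] holo_right[OF sm ho]
      ms_mult[OF b0(1), of t, unfolded msq] by auto
  moreover have "darboux_given_by f (ms \<beta>0 t) fh"
    unfolding msq by (rule darboux_right[OF dif qinv_nz[OF Q] db])
  moreover have "monochromatic \<Gamma> \<beta>0 (ms \<beta>0 t)" by (rule ms_mono[OF t b0(2)])
  ultimately show ?thesis unfolding mono_darboux_def by blast
qed

theorem theorem5p5:
  fixes \<Gamma> :: "complex set" and \<beta>0 :: complex and f fh :: "complex \<Rightarrow> quat"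
  assumes "ham_stat_torus \<Gamma> \<beta>0 f"
  shows "(\<exists>\<mu>. \<mu> \<noteq> 0 \<and> closed_mu_darboux \<Gamma> \<beta>0 f \<mu> fh) \<longleftrightarrow> mono_darboux \<Gamma> \<beta>0 f fh"
proof -
  note ham = assms
  have lat: "lattice \<Gamma>" and b0: "\<beta>0 \<in> dual_lattice \<Gamma>" "\<beta>0 \<noteq> 0"
    using ham unfolding ham_stat_torus_def by auto
  show ?thesis
  proof
    assume "\<exists>\<mu>. \<mu> \<noteq> 0 \<and> closed_mu_darboux \<Gamma> \<beta>0 f \<mu> fh"
    then obtain \<mu> \<alpha> where mu: "\<mu> \<noteq> 0" and cds: "closed_darboux_section \<Gamma> \<beta>0 \<alpha>"
      and par: "\<And>z v. dmu \<beta>0 f \<mu> \<alpha> z v = 0" and db: "darboux_given_by f \<alpha> fh"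
      unfolding closed_mu_darboux_def by blast
    have sm: "smooth \<alpha>" and nz: "\<And>z. \<alpha> z \<noteq> 0" and mul: "has_multiplier \<Gamma> \<alpha>"
      using cds unfolding closed_darboux_section_def by auto
    have dif: "\<And>z. \<alpha> differentiable (at z)" using sm smooth_diff by blast
    define s where "s = csqrt (- 1 / \<mu>)"
    have s2: "s\<^sup>2 * \<mu> = -1" using mu by (simp add: s_def)
    have s0: "s \<noteq> 0" using s2 by auto
    define C1 where "C1 = (fst (Ei \<beta>0 0 \<odot> \<alpha> 0) + snd (Ei \<beta>0 0 \<odot> \<alpha> 0) / s) / 2"
    define C2 where "C2 = (fst (Ei \<beta>0 0 \<odot> \<alpha> 0) + snd (Ei \<beta>0 0 \<odot> \<alpha> 0) / (- s)) / 2"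
    have dec: "\<And>z. \<alpha> z = ms \<beta>0 s z \<odot> qc C1 + ms \<beta>0 (-s) z \<odot> qc C2"
      unfolding C1_def C2_def by (rule decomp(3)[OF ham dif par mu s2])
    show "mono_darboux \<Gamma> \<beta>0 f fh"
    proof (cases "C2 = 0")
      case True
      hence e: "\<And>z. \<alpha> z = ms \<beta>0 s z \<odot> qc C1" using dec by simp
      have "C1 \<noteq> 0" using nz[of 0] e[of 0] by auto
      hence "qc C1 \<noteq> 0" by (simp add: qc_def zero_prod_def)
      thus ?thesis by (rule transfer_ms[OF ham cds db s0 _ e])
    next
      case C2: False
      show ?thesis
      proof (cases "C1 = 0")
        case True
        hence e: "\<And>z. \<alpha> z = ms \<beta>0 (-s) z \<odot> qc C2" using dec by simp
        have "qc C2 \<noteq> 0" using C2 by (simp add: qc_def zero_prod_def)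
        moreover have "- s \<noteq> 0" using s0 by simp
        ultimately show ?thesis using transfer_ms[OF ham cds db _ _ e] by blast
      next
        case C1: False
        have e: "\<And>z. \<alpha> z = ms \<beta>0 s z \<odot> (qc C1 + qj \<odot> qc (- s * C2))"
          by (rule double_point[OF lat b0 s0 mul dec C1 C2])
        have "fst (qc C1 + qj \<odot> qc (- s * C2)) = C1" by (simp add: qc_def qj_def)
        hence "qc C1 + qj \<odot> qc (- s * C2) \<noteq> 0" using C1 by (metis fst_zero)
        thus ?thesis by (rule transfer_ms[OF ham cds db s0 _ e])
      qed
    qed
  next
    assume "mono_darboux \<Gamma> \<beta>0 f fh"
    then obtain \<alpha> where mono: "monochromatic \<Gamma> \<beta>0 \<alpha>" and cds: "closed_darboux_section \<Gamma> \<beta>0 \<alpha>"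
      and db: "darboux_given_by f \<alpha> fh" unfolding mono_darboux_def by blast
    then obtain A B \<delta> c where d: "\<delta> \<in> Gamma_AB \<Gamma> \<beta>0 A B" and c: "c \<noteq> 0" and
      al: "\<alpha> = (\<lambda>z. qexpj (beta \<beta>0 z / 2) \<odot> (qc 1 - qk \<odot> qc (lam \<beta>0 A B \<delta>))
                 \<odot> qc (e_exp (\<delta> - B) z) \<odot> qc (complex_of_real (exp (2 * pi * (A \<bullet> z)))) \<odot> qc c)"
      unfolding monochromatic_def by blast
    define Dd where "Dd = \<delta> - B"
    have c1: "(cmod Dd)\<^sup>2 - (cmod A)\<^sup>2 = (cmod \<beta>0)\<^sup>2 / 4" and c2: "Dd \<bullet> A = 0"
      using d unfolding Gamma_AB_def Dd_def by auto
    define s where "s = \<i> * (2 / \<beta>0 * (Dd - \<i> * A))"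
    note ME = mono_exp[OF b0(2) c1 c2, folded s_def]
    have lamb: "lam \<beta>0 A B \<delta> = - \<i> * s" by (simp add: s_def lam_def Dd_def algebra_simps)
    have "\<alpha> = (\<lambda>z. ms \<beta>0 s z \<odot> qc c)"
    proof
      fix z
      have "qc 1 - qk \<odot> qc (- \<i> * s) = (1, s)" by (simp add: qc_def qk_def prod_eq_iff)
      moreover have "beta \<beta>0 z / 2 = pi * (\<beta>0 \<bullet> z)" by (simp add: beta_def)
      moreover have "e_exp Dd z * complex_of_real (exp (2 * pi * (A \<bullet> z))) = exp (Psi \<beta>0 s z)"
        unfolding e_exp_def ME(2)[of z, symmetric] exp_of_real[symmetric] exp_add by (simp add: mult.commute)
      ultimately show "\<alpha> z = ms \<beta>0 s z \<odot> qc c"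
        unfolding al lamb Dd_def[symmetric]
        by (simp add: ms_def Eq_def qmul_assoc qc_mult qc_right mult.assoc)
    qed
    moreover define \<mu> where "\<mu> = - 1 / s\<^sup>2"
    moreover have s2: "s\<^sup>2 * \<mu> = -1" using ME(1) by (simp add: \<mu>_def)
    ultimately have "\<forall>z v. dmu \<beta>0 f \<mu> \<alpha> z v = 0" using ms_parallel[OF ham s2] by simp
    moreover have "\<mu> \<noteq> 0" using s2 by auto
    ultimately show "\<exists>\<mu>. \<mu> \<noteq> 0 \<and> closed_mu_darboux \<Gamma> \<beta>0 f \<mu> fh"
      unfolding closed_mu_darboux_def using cds db by blast
  qed
qed


end
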